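(* Let $a\in\mathbb{D}\setminus\{0\}$ and $\alpha,\beta\in\mathbb{C}$ with $\beta\neq0$. If $\alpha+\beta K_a$ is $\mathcal{H}^2_{\omega}$-inner, then $\alpha=-\beta K_a(a)$ and $$\alpha+\beta K_a=\mu\,\frac{K_a(a)-K_a}{\sqrt{K_a(a)\,(K_a(a)-1)}}$$ for some $\mu\in\mathbb{C}$ with $|\mu|=1$; conversely every such function is $\mathcal{H}^2_{\omega}$-inner.
   Context: Let $\omega=\{\omega_n\}_{n\geq 0}$ be a sequence of positive reals with $\omega_0=1$ and $\lim_{n\to\infty}\omega_{n+1}/\omega_n=1$. $\mathcal{H}^2_{\omega}$ is the Hilbert space of power series $f(z)=\sum_{n\ge0}a_nz^n$ with $\|f\|^2=\sum_{n\geq0}\omega_n|a_n|^2<\infty$ and inner product $\langle f,g\rangle=\sum_n\omega_na_n\overline{b_n}$; its reproducing kernel on $\mathbb{D}$ is $K_\lambda(z)=\sum_{n\ge0}\overline{\lambda}^nz^n/\omega_n$. A function $f$ is $\mathcal{H}^2_{\omega}$-inner if $\|f\|=1$ and $\langle z^mf,f\rangle=0$ for all integers $m\geq1$. *)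

theory Defs
  imports "HOL-Analysis.Analysis"
begin

text \<open>Elements of H^2_omega are represented by their Taylor coefficient sequences
  f :: nat => complex, i.e. f n is the coefficient of z^n.\<close>

definition weight_ok :: "(nat \<Rightarrow> real) \<Rightarrow> bool" where
  "weight_ok \<omega> \<longleftrightarrow> (\<forall>n. \<omega> n > 0) \<and> \<omega> 0 = 1 \<and> (\<lambda>n. \<omega> (Suc n) / \<omega> n) \<longlonglongrightarrow> 1"

definition in_H2w :: "(nat \<Rightarrow> real) \<Rightarrow> (nat \<Rightarrow> complex) \<Rightarrow> bool" where
  "in_H2w \<omega> f \<longleftrightarrow> summable (\<lambda>n. \<omega> n * (cmod (f n))\<^sup>2)"

definition H2w_norm :: "(nat \<Rightarrow> real) \<Rightarrow> (nat \<Rightarrow> complex) \<Rightarrow> real" where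
  "H2w_norm \<omega> f = sqrt (\<Sum>n. \<omega> n * (cmod (f n))\<^sup>2)"

definition H2w_inner :: "(nat \<Rightarrow> real) \<Rightarrow> (nat \<Rightarrow> complex) \<Rightarrow> (nat \<Rightarrow> complex) \<Rightarrow> complex" where
  "H2w_inner \<omega> f g = (\<Sum>n. complex_of_real (\<omega> n) * f n * cnj (g n))"

definition zpow_mult :: "nat \<Rightarrow> (nat \<Rightarrow> complex) \<Rightarrow> (nat \<Rightarrow> complex)" where
  "zpow_mult m f = (\<lambda>n. if n < m then 0 else f (n - m))"

definition H2w_is_inner :: "(nat \<Rightarrow> real) \<Rightarrow> (nat \<Rightarrow> complex) \<Rightarrow> bool" where
  "H2w_is_inner \<omega> f \<longleftrightarrow> in_H2w \<omega> f \<and> H2w_norm \<omega> f = 1 \<and>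
     (\<forall>m::nat. m \<ge> 1 \<longrightarrow> H2w_inner \<omega> (zpow_mult m f) f = 0)"

definition kernel :: "(nat \<Rightarrow> real) \<Rightarrow> complex \<Rightarrow> (nat \<Rightarrow> complex)" where
  "kernel \<omega> lam = (\<lambda>n. cnj lam ^ n / complex_of_real (\<omega> n))"

definition ps_eval :: "(nat \<Rightarrow> complex) \<Rightarrow> complex \<Rightarrow> complex" where
  "ps_eval f z = (\<Sum>n. f n * z ^ n)"

definition const_ps :: "complex \<Rightarrow> (nat \<Rightarrow> complex)" where
  "const_ps c = (\<lambda>n. if n = 0 then c else 0)"

end

theory Submission
  imports Defs
begin

lemma t_summable:
  assumes w: "weight_ok \<omega>" and a: "cmod a < 1"
  shows "summable (\<lambda>n. ((cmod a)^2)^n / \<omega> n)"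
proof -
  define r where "r = (cmod a)^2"
  have r0: "0 \<le> r" and r1: "r < 1" unfolding r_def using a
    by (auto simp: power_less_one_iff abs_square_less_1)
  have pos: "\<And>n. \<omega> n > 0" using w by (simp add: weight_ok_def)
  have lim: "(\<lambda>n. \<omega> (Suc n) / \<omega> n) \<longlonglongrightarrow> 1" using w by (simp add: weight_ok_def)
  have "(\<lambda>n. r * inverse (\<omega> (Suc n) / \<omega> n)) \<longlonglongrightarrow> r * inverse 1"
    by (intro tendsto_intros lim) simp
  hence lim2: "(\<lambda>n. r * (\<omega> n / \<omega> (Suc n))) \<longlonglongrightarrow> r" by simp
  define c where "c = (1 + r)/2"
  have "r < c" "c < 1" using r1 by (auto simp: c_def)
  hence "eventually (\<lambda>n. r * (\<omega> n / \<omega> (Suc n)) < c) sequentially"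
    using lim2 order_tendstoD(2) by blast
  then obtain N where N: "\<And>n. n \<ge> N \<Longrightarrow> r * (\<omega> n / \<omega> (Suc n)) < c"
    by (auto simp: eventually_sequentially)
  show ?thesis unfolding r_def[symmetric]
  proof (rule summable_ratio_test[of c N])
    show "c < 1" by fact
    fix n assume n: "n \<ge> N"
    have e: "r ^ Suc n / \<omega> (Suc n) = (r * (\<omega> n / \<omega> (Suc n))) * (r^n / \<omega> n)"
      using pos[of n] pos[of "Suc n"] by (simp add: field_simps)
    have "r^n / \<omega> n \<ge> 0" using pos[of n] r0 by simp
    hence "(r * (\<omega> n / \<omega> (Suc n))) * (r^n / \<omega> n) \<le> c * (r^n / \<omega> n)"
      using N[OF n] by (intro mult_right_mono) auto
    moreover have "r * (\<omega> n / \<omega> (Suc n)) \<ge> 0" using pos[of n] pos[of "Suc n"] r0 by simp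
    ultimately show "norm (r ^ Suc n / \<omega> (Suc n)) \<le> c * norm (r^n / \<omega> n)"
      using e pos[of n] pos[of "Suc n"] r0 by simp
  qed
qed


lemma cnj_a_sq: "cnj a * a = of_real ((cmod a)^2)"
  by (metis complex_norm_square mult.commute)

lemma cnj_pow: "cnj a ^ n * a ^ n = of_real (((cmod a)^2)^n)"
  by (simp add: power_mult_distrib[symmetric] cnj_a_sq of_real_power)

lemma K_eval:
  assumes w: "weight_ok \<omega>" and a: "cmod a < 1"
  shows "ps_eval (kernel \<omega> a) a = of_real (\<Sum>n. ((cmod a)^2)^n / \<omega> n)"
proof -
  have "\<And>n. kernel \<omega> a n * a ^ n = of_real (((cmod a)^2)^n / \<omega> n)"
  proof -
    fix n
    have "kernel \<omega> a n * a ^ n = (cnj a ^ n * a ^ n) / of_real (\<omega> n)"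
      by (simp add: kernel_def)
    also have "\<dots> = of_real (((cmod a)^2)^n / \<omega> n)"
      by (simp only: cnj_pow of_real_divide)
    finally show "kernel \<omega> a n * a ^ n = of_real (((cmod a)^2)^n / \<omega> n)" .
  qed
  hence "ps_eval (kernel \<omega> a) a = (\<Sum>n. of_real (((cmod a)^2)^n / \<omega> n))"
    by (simp add: ps_eval_def)
  also have "\<dots> = of_real (\<Sum>n. ((cmod a)^2)^n / \<omega> n)"
    by (rule suminf_of_real[OF t_summable[OF w a], symmetric])
  finally show ?thesis .
qed

lemma Kr_gt1:
  assumes w: "weight_ok \<omega>" and a: "cmod a < 1" "a \<noteq> 0"
  shows "(\<Sum>n. ((cmod a)^2)^n / \<omega> n) > 1"
proof -
  have pos: "\<And>n. \<omega> n > 0" and w0: "\<omega> 0 = 1" using w by (auto simp: weight_ok_def)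
  have "(\<Sum>n<2. ((cmod a)^2)^n / \<omega> n) \<le> (\<Sum>n. ((cmod a)^2)^n / \<omega> n)"
    using t_summable[OF w a(1)] pos by (intro sum_le_suminf) (auto intro!: divide_nonneg_pos)
  moreover have "(\<Sum>n<2. ((cmod a)^2)^n / \<omega> n) = 1 + (cmod a)^2 / \<omega> 1"
    by (simp add: w0 numeral_2_eq_2)
  moreover have "(cmod a)^2 / \<omega> 1 > 0" using pos[of 1] a(2) by simp
  ultimately show ?thesis by linarith
qed

lemma norm_sums:
  assumes w: "weight_ok \<omega>" and a: "cmod a < 1"
  shows "(\<lambda>n. \<omega> n * (cmod (const_ps \<alpha> n + \<beta> * kernel \<omega> a n))^2) sums
     ((cmod (\<alpha>+\<beta>))^2 + (cmod \<beta>)^2 * ((\<Sum>n. ((cmod a)^2)^n / \<omega> n) - 1))"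
proof -
  define t where "t n = ((cmod a)^2)^n / \<omega> n" for n
  have pos: "\<And>n. \<omega> n > 0" and w0: "\<omega> 0 = 1" using w by (auto simp: weight_ok_def)
  have eq: "\<omega> n * (cmod (const_ps \<alpha> n + \<beta> * kernel \<omega> a n))^2 =
      (cmod \<beta>)^2 * t n + (if n = 0 then (cmod (\<alpha>+\<beta>))^2 - (cmod \<beta>)^2 else 0)" for n
  proof (cases "n = 0")
    case True thus ?thesis by (simp add: t_def const_ps_def kernel_def w0)
  next
    case False
    have "cmod (const_ps \<alpha> n + \<beta> * kernel \<omega> a n) = cmod \<beta> * (cmod a)^n / \<omega> n"
      using pos[of n] False by (simp add: const_ps_def kernel_def norm_mult norm_divide norm_power)
    hence "\<omega> n * (cmod (const_ps \<alpha> n + \<beta> * kernel \<omega> a n))^2 = \<omega> n * (cmod \<beta> * (cmod a)^n / \<omega> n)^2"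
      by simp
    also have "\<dots> = (cmod \<beta>)^2 * t n"
      unfolding t_def using pos[of n]
      by (simp add: power_divide power_mult_distrib power_mult[symmetric] mult.commute power2_eq_square)
    finally show ?thesis using False by simp
  qed
  have s1: "(\<lambda>n. (cmod \<beta>)^2 * t n) sums ((cmod \<beta>)^2 * (\<Sum>n. t n))"
    using t_summable[OF w a] unfolding t_def[symmetric] by (intro sums_mult summable_sums)
  have s2: "(\<lambda>n. if n = 0 then (cmod (\<alpha>+\<beta>))^2 - (cmod \<beta>)^2 else 0) sums ((cmod (\<alpha>+\<beta>))^2 - (cmod \<beta>)^2)"
    using sums_single[of 0 "\<lambda>_. (cmod (\<alpha>+\<beta>))^2 - (cmod \<beta>)^2"] by simp
  have "(\<lambda>n. \<omega> n * (cmod (const_ps \<alpha> n + \<beta> * kernel \<omega> a n))^2) sums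
        ((cmod \<beta>)^2 * (\<Sum>n. t n) + ((cmod (\<alpha>+\<beta>))^2 - (cmod \<beta>)^2))"
    unfolding eq by (rule sums_add[OF s1 s2])
  thus ?thesis by (simp add: t_def algebra_simps)
qed

lemma inner_sums:
  assumes w: "weight_ok \<omega>" and a: "cmod a < 1" and m: "m \<ge> 1"
  shows "(\<lambda>n. of_real (\<omega> n) * zpow_mult m (\<lambda>n. const_ps \<alpha> n + \<beta> * kernel \<omega> a n) n
             * cnj (const_ps \<alpha> n + \<beta> * kernel \<omega> a n)) sums
     (cnj \<beta> * a^m * (\<alpha> + \<beta> * of_real (\<Sum>n. ((cmod a)^2)^n / \<omega> n)))"
proof -
  define t where "t n = ((cmod a)^2)^n / \<omega> n" for n
  define g where "g = (\<lambda>n. const_ps \<alpha> n + \<beta> * kernel \<omega> a n)"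
  have pos: "\<And>n. \<omega> n > 0" and w0: "\<omega> 0 = 1" using w by (auto simp: weight_ok_def)
  have g0: "g 0 = \<alpha> + \<beta>" by (simp add: g_def const_ps_def kernel_def w0)
  have gn: "g n = \<beta> * (cnj a ^ n / of_real (\<omega> n))" if "n > 0" for n
    using that by (simp add: g_def const_ps_def kernel_def)
  have cg: "cnj (g n) = cnj \<beta> * (a ^ n / of_real (\<omega> n))" if "n > 0" for n
    using that by (simp add: gn)
  define F where "F n = (if n < m then 0 else cnj \<beta> * a^m * \<beta> * of_real (t (n - m)))" for n
  have eq: "of_real (\<omega> n) * zpow_mult m g n * cnj (g n) =
        F n + (if n = m then cnj \<beta> * a^m * \<alpha> else 0)" for n
  proof -
    consider "n < m" | "n = m" | "n > m" by linarith
    thus ?thesis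
    proof cases
      case 1 thus ?thesis by (simp add: F_def zpow_mult_def)
    next
      case 2
      have "of_real (\<omega> n) * zpow_mult m g n * cnj (g n) = of_real (\<omega> m) * (\<alpha> + \<beta>) * (cnj \<beta> * (a ^ m / of_real (\<omega> m)))"
        using 2 m by (simp add: zpow_mult_def g0 cg)
      also have "\<dots> = cnj \<beta> * a^m * (\<alpha> + \<beta>)"
        using pos[of m] by (simp add: field_simps)
      also have "\<dots> = F n + (if n = m then cnj \<beta> * a^m * \<alpha> else 0)"
        using 2 by (simp add: F_def t_def w0 ring_distribs)
      finally show ?thesis .
    next
      case 3
      obtain k where k: "n = m + k" "k > 0" using 3 by (metis less_imp_add_positive)
      have ak: "cnj a ^ k * a ^ (m + k) = a^m * of_real (((cmod a)^2)^k)"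
        by (simp only: power_add cnj_pow[symmetric] mult_ac)
      have "of_real (\<omega> n) * zpow_mult m g n * cnj (g n) =
           of_real (\<omega> (m+k)) * (\<beta> * (cnj a ^ k / of_real (\<omega> k))) * (cnj \<beta> * (a ^ (m+k) / of_real (\<omega> (m+k))))"
        using k m by (simp add: zpow_mult_def gn cg)
      also have "\<dots> = cnj \<beta> * \<beta> * (cnj a ^ k * a ^ (m + k)) / of_real (\<omega> k)"
        using pos[of k] pos[of "m+k"] by (simp add: field_simps)
      also have "\<dots> = cnj \<beta> * a^m * \<beta> * of_real (t k)"
        unfolding ak t_def using pos[of k] by (simp add: field_simps)
      also have "\<dots> = F n + (if n = m then cnj \<beta> * a^m * \<alpha> else 0)"
        using k by (simp add: F_def)
      finally show ?thesis .
    qed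
  qed
  have sF: "F sums (cnj \<beta> * a^m * \<beta> * of_real (\<Sum>n. t n))"
  proof -
    have st: "summable t" using t_summable[OF w a] unfolding t_def[abs_def] .
    have "(\<lambda>n. of_real (t n) :: complex) sums of_real (\<Sum>n. t n)"
      using sums_of_real[OF summable_sums[OF st]] .
    hence "(\<lambda>i. cnj \<beta> * a^m * \<beta> * of_real (t i)) sums (cnj \<beta> * a^m * \<beta> * of_real (\<Sum>n. t n))"
      by (rule sums_mult)
    moreover have "(\<lambda>i. F (i + m)) = (\<lambda>i. cnj \<beta> * a^m * \<beta> * of_real (t i))"
      by (simp add: F_def)
    ultimately have "(\<lambda>i. F (i + m)) sums (cnj \<beta> * a^m * \<beta> * of_real (\<Sum>n. t n))" by simp
    moreover have "sum F {..<m} = 0" by (simp add: F_def)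
    ultimately show ?thesis using sums_iff_shift[of F m] by simp
  qed
  have s2: "(\<lambda>n. if n = m then cnj \<beta> * a^m * \<alpha> else 0) sums (cnj \<beta> * a^m * \<alpha>)"
    using sums_single[of m "\<lambda>_. cnj \<beta> * a^m * \<alpha>"] by simp
  have "(\<lambda>n. of_real (\<omega> n) * zpow_mult m g n * cnj (g n)) sums
         (cnj \<beta> * a^m * \<beta> * of_real (\<Sum>n. t n) + cnj \<beta> * a^m * \<alpha>)"
    unfolding eq by (rule sums_add[OF sF s2])
  thus ?thesis unfolding g_def t_def by (simp add: algebra_simps)
qed

lemma inner_iff:
  assumes w: "weight_ok \<omega>" and a: "cmod a < 1"
  shows "H2w_is_inner \<omega> (\<lambda>n. const_ps \<alpha> n + \<beta> * kernel \<omega> a n) \<longleftrightarrow>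
    (cmod (\<alpha>+\<beta>))^2 + (cmod \<beta>)^2 * ((\<Sum>n. ((cmod a)^2)^n / \<omega> n) - 1) = 1 \<and>
    (\<forall>m::nat. m \<ge> 1 \<longrightarrow> cnj \<beta> * a^m * (\<alpha> + \<beta> * of_real (\<Sum>n. ((cmod a)^2)^n / \<omega> n)) = 0)"
proof -
  note ns = norm_sums[OF w a, of \<alpha> \<beta>]
  have i1: "in_H2w \<omega> (\<lambda>n. const_ps \<alpha> n + \<beta> * kernel \<omega> a n)"
    unfolding in_H2w_def using sums_summable[OF ns] .
  have i2: "H2w_norm \<omega> (\<lambda>n. const_ps \<alpha> n + \<beta> * kernel \<omega> a n) =
     sqrt ((cmod (\<alpha>+\<beta>))^2 + (cmod \<beta>)^2 * ((\<Sum>n. ((cmod a)^2)^n / \<omega> n) - 1))"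
    unfolding H2w_norm_def using sums_unique[OF ns] by simp
  have i3: "H2w_inner \<omega> (zpow_mult m (\<lambda>n. const_ps \<alpha> n + \<beta> * kernel \<omega> a n)) (\<lambda>n. const_ps \<alpha> n + \<beta> * kernel \<omega> a n)
     = cnj \<beta> * a^m * (\<alpha> + \<beta> * of_real (\<Sum>n. ((cmod a)^2)^n / \<omega> n))" if "m \<ge> 1" for m
    unfolding H2w_inner_def using sums_unique[OF inner_sums[OF w a that, of \<alpha> \<beta>]] by simp
  show ?thesis unfolding H2w_is_inner_def using i1 i2 i3 by (auto simp: real_sqrt_eq_1_iff)
qed

theorem mainTheorem12:
  fixes \<omega> :: "nat \<Rightarrow> real" and a \<alpha> \<beta> :: complex
  assumes "weight_ok \<omega>"
    and "a \<noteq> 0" and "cmod a < 1"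
    and "\<beta> \<noteq> 0"
  shows "(H2w_is_inner \<omega> (\<lambda>n. const_ps \<alpha> n + \<beta> * kernel \<omega> a n) \<longrightarrow>
           \<alpha> = - \<beta> * ps_eval (kernel \<omega> a) a \<and>
           (\<exists>\<mu>::complex. cmod \<mu> = 1 \<and>
              (\<lambda>n. const_ps \<alpha> n + \<beta> * kernel \<omega> a n) =
              (\<lambda>n. \<mu> * (const_ps (ps_eval (kernel \<omega> a) a) n - kernel \<omega> a n) /
                    csqrt (ps_eval (kernel \<omega> a) a * (ps_eval (kernel \<omega> a) a - 1)))))
       \<and> (\<forall>\<mu>::complex. cmod \<mu> = 1 \<longrightarrow>
           H2w_is_inner \<omega> (\<lambda>n. \<mu> * (const_ps (ps_eval (kernel \<omega> a) a) n - kernel \<omega> a n) /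
                    csqrt (ps_eval (kernel \<omega> a) a * (ps_eval (kernel \<omega> a) a - 1))))"
proof -
  note w = assms(1) and a = assms(3) and a0 = assms(2) and b0 = assms(4)
  define Kr where "Kr = (\<Sum>n. ((cmod a)^2)^n / \<omega> n)"
  have KE: "ps_eval (kernel \<omega> a) a = of_real Kr" unfolding Kr_def by (rule K_eval[OF w a])
  have K1: "Kr > 1" unfolding Kr_def by (rule Kr_gt1[OF w a a0])
  define sr where "sr = sqrt (Kr * (Kr - 1))"
  have sr0: "sr > 0" unfolding sr_def using K1 by simp
  have sr2: "sr^2 = Kr * (Kr - 1)" unfolding sr_def using K1 by simp
  have CS: "csqrt (ps_eval (kernel \<omega> a) a * (ps_eval (kernel \<omega> a) a - 1)) = of_real sr"
  proof -
    have "ps_eval (kernel \<omega> a) a * (ps_eval (kernel \<omega> a) a - 1) = of_real (Kr * (Kr - 1))"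
      by (simp add: KE)
    thus ?thesis unfolding sr_def using K1 by (simp add: csqrt_of_real_nonneg)
  qed
  have II: "H2w_is_inner \<omega> (\<lambda>n. const_ps x n + y * kernel \<omega> a n) \<longleftrightarrow>
    (cmod (x+y))^2 + (cmod y)^2 * (Kr - 1) = 1 \<and>
    (\<forall>m::nat. m \<ge> 1 \<longrightarrow> cnj y * a^m * (x + y * of_real Kr) = 0)" for x y
    unfolding Kr_def by (rule inner_iff[OF w a])
  show ?thesis
  proof (intro conjI impI allI)
    assume H: "H2w_is_inner \<omega> (\<lambda>n. const_ps \<alpha> n + \<beta> * kernel \<omega> a n)"
    have "cnj \<beta> * a^1 * (\<alpha> + \<beta> * of_real Kr) = 0" using H II by auto
    hence al: "\<alpha> = - \<beta> * of_real Kr" using a0 b0 by (simp add: add_eq_0_iff2)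
    thus "\<alpha> = - \<beta> * ps_eval (kernel \<omega> a) a" by (simp add: KE)
    have N: "(cmod (\<alpha>+\<beta>))^2 + (cmod \<beta>)^2 * (Kr - 1) = 1" using H II by auto
    have "cmod (\<alpha>+\<beta>) = cmod \<beta> * (Kr - 1)"
    proof -
      have "\<alpha>+\<beta> = - \<beta> * of_real (Kr - 1)" using al by (simp add: algebra_simps)
      hence "cmod (\<alpha>+\<beta>) = cmod \<beta> * \<bar>Kr - 1\<bar>" by (simp only: norm_mult norm_minus_cancel norm_of_real)
      thus ?thesis using K1 by simp
    qed
    with N have "(cmod \<beta>)^2 * (Kr * (Kr - 1)) = 1" by (simp add: power_mult_distrib algebra_simps power2_eq_square)
    hence "(cmod \<beta> * sr)^2 = 1" by (simp add: power_mult_distrib sr2)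
    hence bs: "cmod \<beta> * sr = 1" using sr0 by (simp add: power2_eq_1_iff) (smt (verit) norm_ge_zero zero_le_mult_iff)
    show "\<exists>\<mu>::complex. cmod \<mu> = 1 \<and>
              (\<lambda>n. const_ps \<alpha> n + \<beta> * kernel \<omega> a n) =
              (\<lambda>n. \<mu> * (const_ps (ps_eval (kernel \<omega> a) a) n - kernel \<omega> a n) /
                    csqrt (ps_eval (kernel \<omega> a) a * (ps_eval (kernel \<omega> a) a - 1)))"
    proof (intro exI conjI)
      show "cmod (- \<beta> * of_real sr) = 1" using bs sr0 by (simp add: norm_mult)
      show "(\<lambda>n. const_ps \<alpha> n + \<beta> * kernel \<omega> a n) =
              (\<lambda>n. (- \<beta> * of_real sr) * (const_ps (ps_eval (kernel \<omega> a) a) n - kernel \<omega> a n) /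
                    csqrt (ps_eval (kernel \<omega> a) a * (ps_eval (kernel \<omega> a) a - 1)))"
        unfolding CS unfolding KE using sr0 al by (auto simp: const_ps_def field_simps)
    qed
  next
    fix \<mu> :: complex assume mu: "cmod \<mu> = 1"
    define x where "x = \<mu> * of_real Kr / of_real sr"
    define y where "y = - \<mu> / of_real sr"
    have feq: "(\<lambda>n. \<mu> * (const_ps (ps_eval (kernel \<omega> a) a) n - kernel \<omega> a n) /
                    csqrt (ps_eval (kernel \<omega> a) a * (ps_eval (kernel \<omega> a) a - 1))) =
          (\<lambda>n. const_ps x n + y * kernel \<omega> a n)"
      unfolding CS unfolding KE x_def y_def using sr0 by (auto simp: const_ps_def field_simps)
    have z: "x + y * of_real Kr = 0" unfolding x_def y_def by (simp add: field_simps)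
    have cy: "cmod y = 1 / sr" unfolding y_def using mu sr0 by (simp add: norm_divide)
    have "x + y = \<mu> * of_real (Kr - 1) / of_real sr" unfolding x_def y_def using sr0 by (simp add: field_simps)
    hence "cmod (x+y) = cmod \<mu> * \<bar>Kr - 1\<bar> / \<bar>sr\<bar>" by (simp only: norm_divide norm_mult norm_of_real)
    hence cxy: "cmod (x+y) = (Kr - 1) / sr" using mu sr0 K1 by simp
    have "(cmod (x+y))^2 + (cmod y)^2 * (Kr - 1) = ((Kr-1)^2 + (Kr - 1)) / sr^2"
      unfolding cxy cy using sr0 by (simp add: power_divide field_simps)
    also have "\<dots> = 1" unfolding sr2 using K1 by (simp add: power2_eq_square field_simps)
    finally show "H2w_is_inner \<omega> (\<lambda>n. \<mu> * (const_ps (ps_eval (kernel \<omega> a) a) n - kernel \<omega> a n) /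
                    csqrt (ps_eval (kernel \<omega> a) a * (ps_eval (kernel \<omega> a) a - 1)))"
      unfolding feq II using z by simp
  qed
qed

end
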